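(* Fix $n \ge 1$ and finite sets $\mathsf{AP}^I_L$, $\mathsf{AP}^O$, and let $\mathcal{I} = 2^{\mathsf{AP}^I_L \times \{0,\dots,n-1\}}$ and $\mathcal{O} = 2^{\mathsf{AP}^O \times \{0,\dots,n-1\}}$. A computation tree $\langle \mathcal{I}^*, \tau\rangle$ with $\tau : \mathcal{I}^* \to \mathcal{O}$ is regular and has the symmetry property if and only if it is the computation tree induced by the rotation-symmetric architecture with $n$ processes for some finite-state process implementation (Moore machine) $\mathcal{M}$ with input alphabet $\mathcal{I}$ and output alphabet $2^{\mathsf{AP}^O}$.
   Context: All indices are taken modulo $n$, where the modulo function always returns a value in $\{0,\dots,n-1\}$. For a set $\mathsf{AP}$, $U = 2^{\mathsf{AP}\times\{0,\dots,n-1\}}$ and $k \in \mathbb{Z}$, define $\mathrm{rot}(u,k) = \{(p,(j+k) \bmod n) \mid (p,j) \in u\}$ for $u \in U$; $\mathrm{rot}$ is extended letterwise to finite and infinite words over $U$. A computation tree is a map $\tau : \mathcal{I}^* \to \mathcal{O}$ (the label $\tau(t)$ is the output after reading the input sequence $t$). For $\hat t \in \mathcal{I}^*$, the subtree at $\hat t$ is the tree $t \mapsto \tau(\hat t t)$; the tree is regular if it has only finitely many distinct subtrees. The tree has the symmetry property if $\tau(\mathrm{rot}(t,i)) = \mathrm{rot}(\tau(t),i)$ for all $t \in \mathcal{I}^*$ and $0 \le i < n$. A Moore machine is $\mathcal{M} = (S,\mathcal{I},O,\delta,s_0,L)$ with finite state set $S$, transition function $\delta : S\times\mathcal{I}\to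 S$, initial state $s_0$ and labelling $L : S \to O$, where $O = 2^{\mathsf{AP}^O}$. The rotation-symmetric architecture with $n$ processes runs $n$ copies $p_0,\dots,p_{n-1}$ of $\mathcal{M}$ synchronously: the composed machine has states $S^n$, initial state $(s_0,\dots,s_0)$, transition $\delta'((s_0',\dots,s_{n-1}'),x) = (\delta(s_0',\mathrm{rot}(x,0)),\delta(s_1',\mathrm{rot}(x,-1)),\dots,\delta(s_{n-1}',\mathrm{rot}(x,-(n-1))))$ for $x \in \mathcal{I}$ (process $j$ sees the global input rotated by $-j$), and output $\bigcup_{j} L(s_j')\times\{j\} \in \mathcal{O}$ (the output proposition $o$ of process $j$ is the signal $(o,j)$). The induced computation tree maps $t \in \mathcal{I}^*$ to the output of the state of the composed machine reached after reading $t$ from the initial state. *)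

theory Defs
  imports Main
begin

definition alph :: "nat \<Rightarrow> 'p set \<Rightarrow> ('p \<times> nat) set set" where
  "alph n AP = Pow (AP \<times> {..<n})"

definition rot :: "nat \<Rightarrow> ('p \<times> nat) set \<Rightarrow> int \<Rightarrow> ('p \<times> nat) set" where
  "rot n u k = {(p, nat ((int j + k) mod int n)) | p j. (p, j) \<in> u}"

definition rotw :: "nat \<Rightarrow> ('p \<times> nat) set list \<Rightarrow> int \<Rightarrow> ('p \<times> nat) set list" where
  "rotw n t k = map (\<lambda>u. rot n u k) t"

definition subtree :: "'i set \<Rightarrow> ('i list \<Rightarrow> 'o) \<Rightarrow> 'i list \<Rightarrow> ('i list \<Rightarrow> 'o)" where
  "subtree I \<tau> th = (\<lambda>t. if t \<in> lists I then \<tau> (th @ t) else undefined)"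

definition regular_tree :: "'i set \<Rightarrow> ('i list \<Rightarrow> 'o) \<Rightarrow> bool" where
  "regular_tree I \<tau> \<longleftrightarrow> finite (subtree I \<tau> ` lists I)"

definition symmetric_tree ::
  "nat \<Rightarrow> 'a set \<Rightarrow> (('a \<times> nat) set list \<Rightarrow> ('b \<times> nat) set) \<Rightarrow> bool" where
  "symmetric_tree n API \<tau> \<longleftrightarrow>
     (\<forall>t \<in> lists (alph n API). \<forall>i < n. \<tau> (rotw n t (int i)) = rot n (\<tau> t) (int i))"

text \<open>Moore machine (S, I, 2^APO, \<delta>, s0, L); states are represented by naturals
  (any finite state set can be so encoded).\<close>
definition moore_machine ::
  "nat set \<Rightarrow> 'i set \<Rightarrow> 'b set \<Rightarrow> (nat \<Rightarrow> 'i \<Rightarrow> nat) \<Rightarrow> nat \<Rightarrow> (nat \<Rightarrow> 'b set) \<Rightarrow> bool" where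
  "moore_machine S I APO \<delta> s0 L \<longleftrightarrow>
     finite S \<and> s0 \<in> S \<and> (\<forall>s \<in> S. \<forall>x \<in> I. \<delta> s x \<in> S) \<and> (\<forall>s \<in> S. L s \<subseteq> APO)"

text \<open>Composed machine of the rotation-symmetric architecture: global state maps
  process index j to the local state of process j.\<close>
definition arch_step ::
  "nat \<Rightarrow> (nat \<Rightarrow> ('a \<times> nat) set \<Rightarrow> nat) \<Rightarrow> (nat \<Rightarrow> nat) \<Rightarrow> ('a \<times> nat) set \<Rightarrow> (nat \<Rightarrow> nat)" where
  "arch_step n \<delta> c x = (\<lambda>j. \<delta> (c j) (rot n x (- int j)))"

definition arch_out :: "nat \<Rightarrow> (nat \<Rightarrow> 'b set) \<Rightarrow> (nat \<Rightarrow> nat) \<Rightarrow> ('b \<times> nat) set" where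
  "arch_out n L c = (\<Union>j < n. L (c j) \<times> {j})"

definition induced_tree ::
  "nat \<Rightarrow> (nat \<Rightarrow> ('a \<times> nat) set \<Rightarrow> nat) \<Rightarrow> nat \<Rightarrow> (nat \<Rightarrow> 'b set)
    \<Rightarrow> ('a \<times> nat) set list \<Rightarrow> ('b \<times> nat) set" where
  "induced_tree n \<delta> s0 L t = arch_out n L (foldl (arch_step n \<delta>) (\<lambda>_. s0) t)"

end

theory Submission
  imports Defs
begin

lemma rot_mod: assumes "k mod int n = k' mod int n" shows "rot n u k = rot n u k'"
proof -
  have "(int j + k) mod int n = (int j + k') mod int n" for j
    using mod_add_right_eq[of "int j" k "int n"] mod_add_right_eq[of "int j" k' "int n"] assms by simp
  then show ?thesis unfolding rot_def by simp
qed

lemma rot_rot_aux: "n > 0 \<Longrightarrow> nat ((int (nat ((int j + a) mod int n)) + b) mod int n) = nat ((int j + (a + b)) mod int n)"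
  by (simp add: mod_add_left_eq add.assoc)

lemma rot_rot: assumes "n > 0" shows "rot n (rot n u a) b = rot n u (a+b)"
proof (rule set_eqI, rule iffI)
  fix z assume "z \<in> rot n (rot n u a) b"
  then obtain p j where "z = (p, nat ((int (nat ((int j + a) mod int n)) + b) mod int n))" "(p,j) \<in> u"
    unfolding rot_def by blast
  then show "z \<in> rot n u (a+b)" unfolding rot_def using rot_rot_aux[OF assms, of j a b] by blast
next
  fix z assume "z \<in> rot n u (a+b)"
  then obtain p j where z: "z = (p, nat ((int j + (a+b)) mod int n))" "(p,j) \<in> u"
    unfolding rot_def by blast
  have "(p, nat ((int j + a) mod int n)) \<in> rot n u a" using z(2) unfolding rot_def by blast
  then have "(p, nat ((int (nat ((int j + a) mod int n)) + b) mod int n)) \<in> rot n (rot n u a) b"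
    unfolding rot_def[of n "rot n u a"] by blast
  then show "z \<in> rot n (rot n u a) b" using z(1) rot_rot_aux[OF assms, of j a b] by simp
qed

lemma rot_alph: "n > 0 \<Longrightarrow> u \<in> alph n A \<Longrightarrow> rot n u k \<in> alph n A"
  unfolding rot_def alph_def by (auto simp: nat_less_iff)

lemma mod_zero_eq: "(j'::nat) < n \<Longrightarrow> j < n \<Longrightarrow> (int j' - int j) mod int n = 0 \<Longrightarrow> j' = j"
proof (rule ccontr)
  assume a: "j' < n" "j < n" "(int j' - int j) mod int n = 0" "j' \<noteq> j"
  then have "int n dvd (int j' - int j)" by (simp add: mod_eq_0_iff_dvd)
  then have "\<bar>int n\<bar> \<le> \<bar>int j' - int j\<bar>" using a(4) by (intro dvd_imp_le_int) auto
  then show False using a(1,2) by linarith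
qed

lemma rot_mem0: assumes "u \<subseteq> A \<times> {..<n}" "j < n"
  shows "((q,0) \<in> rot n u (- int j)) = ((q,j) \<in> u)"
proof
  assume "(q,0) \<in> rot n u (- int j)"
  then obtain p j' where pj: "(q,0) = (p, nat ((int j' + - int j) mod int n))" "(p,j') \<in> u"
    unfolding rot_def by blast
  then have j': "(q,j') \<in> u" "nat ((int j' + - int j) mod int n) = 0" by simp_all
  have jn: "j' < n" using j'(1) assms(1) by blast
  have "int n > 0" using assms(2) by simp
  then have "(int j' + - int j) mod int n \<ge> 0" by simp
  then have "(int j' - int j) mod int n = 0" using j'(2) by simp
  then have "j' = j" by (rule mod_zero_eq[OF jn assms(2)])
  then show "(q,j) \<in> u" using j'(1) by simp
next
  assume "(q,j) \<in> u"
  then have "(q, nat ((int j + - int j) mod int n)) \<in> rot n u (- int j)" unfolding rot_def by blast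
  then show "(q,0) \<in> rot n u (- int j)" by simp
qed

lemma foldl_arch: "foldl (arch_step n \<delta>) c t = (\<lambda>j. foldl \<delta> (c j) (map (\<lambda>x. rot n x (- int j)) t))"
  by (induction t arbitrary: c) (auto simp: arch_step_def)

lemma rot_union:
  assumes n: "n > 0" and f: "\<And>k k'. k mod int n = k' mod int n \<Longrightarrow> f k = f k'"
  shows "rot n (\<Union>j<n. f (- int j) \<times> {j}) i = (\<Union>j<n. f (i - int j) \<times> {j})"
proof (rule set_eqI, rule iffI)
  fix z assume "z \<in> rot n (\<Union>j<n. f (- int j) \<times> {j}) i"
  then obtain p j where z: "z = (p, nat ((int j + i) mod int n))" "j < n" "p \<in> f (- int j)"
    unfolding rot_def by blast
  define m where "m = nat ((int j + i) mod int n)"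
  have m: "m < n" "int m = (int j + i) mod int n" using n unfolding m_def
    by (simp_all add: nat_less_iff)
  have "(i - int m) mod int n = (- int j) mod int n" unfolding m(2)
    by (metis add_diff_cancel_left' diff_add_cancel minus_diff_eq mod_diff_right_eq)
  then have "p \<in> f (i - int m)" using f z(3) by metis
  then show "z \<in> (\<Union>j<n. f (i - int j) \<times> {j})" using z(1) m(1) m_def by blast
next
  fix z assume "z \<in> (\<Union>j<n. f (i - int j) \<times> {j})"
  then obtain p m where z: "z = (p, m)" "m < n" "p \<in> f (i - int m)" by blast
  define j where "j = nat ((int m - i) mod int n)"
  have j: "j < n" "int j = (int m - i) mod int n" using n unfolding j_def
    by (simp_all add: nat_less_iff)
  have "(int j + i) mod int n = int m" unfolding j(2) using z(2)
    by (simp add: mod_add_left_eq)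
  then have jm: "nat ((int j + i) mod int n) = m" by simp
  have "(- int j) mod int n = (i - int m) mod int n" unfolding j(2)
    by (metis minus_diff_eq mod_minus_eq)
  then have "p \<in> f (- int j)" using f z(3) by metis
  then have "(p, j) \<in> (\<Union>j<n. f (- int j) \<times> {j})" using j(1) by blast
  then have "(p, nat ((int j + i) mod int n)) \<in> rot n (\<Union>j<n. f (- int j) \<times> {j}) i"
    unfolding rot_def by blast
  then show "z \<in> rot n (\<Union>j<n. f (- int j) \<times> {j}) i" using z(1) jm by simp
qed


lemma fold_in_S: "(\<forall>s\<in>S. \<forall>x\<in>I. \<delta> s x \<in> S) \<Longrightarrow> s \<in> S \<Longrightarrow> u \<in> lists I \<Longrightarrow> foldl \<delta> s u \<in> S"
  by (induction u arbitrary: s) auto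

lemma map_rot_lists: "n > 0 \<Longrightarrow> t \<in> lists (alph n A) \<Longrightarrow> map (\<lambda>x. rot n x k) t \<in> lists (alph n A)"
  using rot_alph by (induction t) auto

lemma ind_eq: "induced_tree n \<delta> s0 L t = (\<Union>j<n. L (foldl \<delta> s0 (map (\<lambda>x. rot n x (- int j)) t)) \<times> {j})"
  unfolding induced_tree_def arch_out_def foldl_arch by simp

lemma bwd_sym:
  assumes n: "n > 0"
    and eq: "\<forall>t \<in> lists (alph n API). \<tau> t = induced_tree n \<delta> s0 L t"
  shows "symmetric_tree n API \<tau>"
  unfolding symmetric_tree_def
proof (intro ballI allI impI)
  fix t i assume t: "t \<in> lists (alph n API)" and i: "i < n"
  define P where "P k = foldl \<delta> s0 (map (\<lambda>x. rot n x k) t)" for k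
  have Pm: "P k = P k'" if "k mod int n = k' mod int n" for k k'
  proof -
    have "map (\<lambda>x. rot n x k) t = map (\<lambda>x. rot n x k') t" by (intro map_cong refl rot_mod[OF that])
    then show ?thesis unfolding P_def by (rule arg_cong)
  qed
  have rt: "rotw n t (int i) \<in> lists (alph n API)"
    unfolding rotw_def using map_rot_lists[OF n t] .
  have "foldl \<delta> s0 (map (\<lambda>x. rot n x (- int j)) (rotw n t (int i))) = P (int i - int j)" for j
    unfolding P_def rotw_def by (simp add: rot_rot[OF n] o_def)
  note Pr = this
  have "\<tau> (rotw n t (int i)) = induced_tree n \<delta> s0 L (rotw n t (int i))" using eq rt by blast
  also have "\<dots> = (\<Union>j<n. L (P (int i - int j)) \<times> {j})" unfolding ind_eq Pr ..
  also have "\<dots> = rot n (\<Union>j<n. L (P (- int j)) \<times> {j}) (int i)"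
  proof -
    have "L (P k) = L (P k')" if "k mod int n = k' mod int n" for k k'
      using Pm[OF that] by simp
    then have "rot n (\<Union>j<n. (\<lambda>k. L (P k)) (- int j) \<times> {j}) (int i) = (\<Union>j<n. (\<lambda>k. L (P k)) (int i - int j) \<times> {j})"
      by (rule rot_union[OF n])
    then show ?thesis by simp
  qed
  also have "\<dots> = rot n (\<tau> t) (int i)"
  proof -
    have "\<tau> t = induced_tree n \<delta> s0 L t" using eq t by blast
    then show ?thesis unfolding ind_eq P_def by simp
  qed
  finally show "\<tau> (rotw n t (int i)) = rot n (\<tau> t) (int i)" .
qed

lemma bwd_reg:
  assumes n: "n > 0"
    and mm: "moore_machine S (alph n API) APO \<delta> s0 L"
    and eq: "\<forall>t \<in> lists (alph n API). \<tau> t = induced_tree n \<delta> s0 L t"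
  shows "regular_tree (alph n API) \<tau>"
proof -
  define I where "I = alph n API"
  define \<Phi> where "\<Phi> c = (\<lambda>t. if t \<in> lists I then (\<Union>j<n. L (foldl \<delta> (c j) (map (\<lambda>x. rot n x (- int j)) t)) \<times> {j}) else undefined)" for c :: "nat \<Rightarrow> nat"
  define C where "C th = foldl (arch_step n \<delta>) (\<lambda>_. s0) th" for th
  have sub: "subtree I \<tau> th = \<Phi> (C th)" if th: "th \<in> lists I" for th
  proof (rule ext)
    fix t
    show "subtree I \<tau> th t = \<Phi> (C th) t"
    proof (cases "t \<in> lists I")
      case True
      then have "th @ t \<in> lists I" using th by simp
      then have "\<tau> (th @ t) = induced_tree n \<delta> s0 L (th @ t)" using eq unfolding I_def by blast
      also have "\<dots> = arch_out n L (foldl (arch_step n \<delta>) (C th) t)"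
        unfolding induced_tree_def C_def by simp
      also have "\<dots> = \<Phi> (C th) t" unfolding \<Phi>_def arch_out_def foldl_arch using True by simp
      finally show ?thesis unfolding subtree_def using True by simp
    next
      case False
      then show ?thesis unfolding subtree_def \<Phi>_def by simp
    qed
  qed
  have cong: "\<Phi> c = \<Phi> c'" if "\<forall>j<n. c j = c' j" for c c'
    unfolding \<Phi>_def using that by (intro ext if_cong refl SUP_cong) auto
  define Xs where "Xs = {xs. set xs \<subseteq> S \<and> length xs = n}"
  have fS: "finite S" and cl: "\<forall>s\<in>S. \<forall>x\<in>I. \<delta> s x \<in> S" and s0: "s0 \<in> S"
    using mm unfolding moore_machine_def I_def by auto
  have fX: "finite Xs" unfolding Xs_def using finite_lists_length_eq[OF fS] .
  have "subtree I \<tau> ` lists I \<subseteq> (\<lambda>xs. \<Phi> (\<lambda>j. xs ! j)) ` Xs"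
  proof
    fix T assume "T \<in> subtree I \<tau> ` lists I"
    then obtain th where th: "th \<in> lists I" "T = subtree I \<tau> th" by blast
    define xs where "xs = map (C th) [0..<n]"
    have "C th j \<in> S" for j
    proof -
      have "map (\<lambda>x. rot n x (- int j)) th \<in> lists I"
        using map_rot_lists[OF n] th(1) unfolding I_def by blast
      then show ?thesis unfolding C_def foldl_arch using fold_in_S[OF cl s0] by blast
    qed
    then have "xs \<in> Xs" unfolding Xs_def xs_def by auto
    moreover have "\<Phi> (\<lambda>j. xs ! j) = \<Phi> (C th)" by (rule cong) (simp add: xs_def)
    moreover have "T = \<Phi> (C th)" using th sub by simp
    ultimately show "T \<in> (\<lambda>xs. \<Phi> (\<lambda>j. xs ! j)) ` Xs" by (metis image_eqI)
  qed
  then show ?thesis unfolding regular_tree_def I_def[symmetric]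
    using fX finite_subset by blast
qed


lemma fwd:
  assumes n: "n > 0"
    and ht: "\<forall>t \<in> lists (alph n API). \<tau> t \<in> alph n APO"
    and reg: "regular_tree (alph n API) \<tau>"
    and sym: "symmetric_tree n API \<tau>"
  shows "\<exists>S \<delta> s0 L. moore_machine S (alph n API) APO \<delta> s0 L \<and>
            (\<forall>t \<in> lists (alph n API). \<tau> t = induced_tree n \<delta> s0 L t)"
proof -
  define I where "I = alph n API"
  define F where "F = subtree I \<tau> ` lists I"
  have fF: "finite F" using reg unfolding regular_tree_def F_def I_def .
  obtain h where bij: "bij_betw h {0..<card F} F" using ex_bij_betw_nat_finite[OF fF] by blast
  define S where "S = {0..<card F}"
  define g where "g = inv_into S h"
  define nxt where "nxt T x = (\<lambda>t. if t \<in> lists I then T (x # t) else undefined)"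
    for T :: "('a \<times> nat) set list \<Rightarrow> ('b \<times> nat) set" and x
  define \<delta> where "\<delta> s x = g (nxt (h s) x)" for s x
  define L where "L s = {q. (q,0) \<in> h s []}" for s
  define s0 where "s0 = g (subtree I \<tau> [])"
  have bij': "bij_betw h S F" using bij unfolding S_def .
  have hg: "h (g y) = y" if "y \<in> F" for y
    unfolding g_def using bij_betw_inv_into_right[OF bij' that] .
  have gS: "g y \<in> S" if "y \<in> F" for y
    unfolding g_def using bij_betw_imp_surj_on[OF bij'] that by (metis inv_into_into)
  have hS: "h s \<in> F" if "s \<in> S" for s using bij_betw_apply[OF bij' that] .
  have subF: "subtree I \<tau> th \<in> F" if "th \<in> lists I" for th
    unfolding F_def using that by blast
  have nxt_sub: "nxt (subtree I \<tau> th) x = subtree I \<tau> (th @ [x])" if "x \<in> I" for th x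
    unfolding nxt_def subtree_def using that by (intro ext) simp
  have mm: "moore_machine S I APO \<delta> s0 L"
    unfolding moore_machine_def
  proof (intro conjI ballI)
    show "finite S" unfolding S_def by simp
    show "s0 \<in> S" unfolding s0_def by (rule gS, rule subF) simp
  next
    fix s x assume s: "s \<in> S" and x: "x \<in> I"
    obtain th where th: "th \<in> lists I" "h s = subtree I \<tau> th"
      using hS[OF s] unfolding F_def by blast
    show "\<delta> s x \<in> S" unfolding \<delta>_def th(2) nxt_sub[OF x]
      by (rule gS, rule subF) (simp add: th(1) x)
  next
    fix s assume s: "s \<in> S"
    obtain th where th: "th \<in> lists I" "h s = subtree I \<tau> th"
      using hS[OF s] unfolding F_def by blast
    have "h s [] = \<tau> th" unfolding th(2) subtree_def by simp
    moreover have "\<tau> th \<in> alph n APO" using ht th(1) unfolding I_def by blast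
    ultimately show "L s \<subseteq> APO" unfolding L_def alph_def by auto
  qed
  have run: "foldl \<delta> s0 u = g (subtree I \<tau> u)" if "u \<in> lists I" for u
    using that
  proof (induction u rule: rev_induct)
    case Nil
    then show ?case unfolding s0_def by simp
  next
    case (snoc x u)
    then have u: "u \<in> lists I" and x: "x \<in> I" by auto
    have "foldl \<delta> s0 (u @ [x]) = \<delta> (g (subtree I \<tau> u)) x" using snoc.IH[OF u] by simp
    also have "\<dots> = g (subtree I \<tau> (u @ [x]))"
      unfolding \<delta>_def hg[OF subF[OF u]] nxt_sub[OF x] ..
    finally show ?case .
  qed
  have out: "\<tau> t = induced_tree n \<delta> s0 L t" if t: "t \<in> lists I" for t
  proof -
    have tsub: "\<tau> t \<subseteq> APO \<times> {..<n}" using ht t unfolding I_def alph_def by blast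
    have Lj: "L (foldl \<delta> s0 (map (\<lambda>x. rot n x (- int j)) t)) = {q. (q,j) \<in> \<tau> t}" if j: "j < n" for j
    proof -
      define u where "u = map (\<lambda>x. rot n x (- int j)) t"
      have u: "u \<in> lists I" unfolding u_def I_def using map_rot_lists[OF n] t unfolding I_def by blast
      define i where "i = nat ((- int j) mod int n)"
      have i: "i < n" "int i mod int n = (- int j) mod int n" using n unfolding i_def
        by (simp_all add: nat_less_iff)
      have "u = rotw n t (int i)" unfolding u_def rotw_def
        by (intro map_cong refl rot_mod) (simp add: i(2))
      then have "\<tau> u = rot n (\<tau> t) (int i)" using sym t i(1) unfolding symmetric_tree_def I_def by blast
      also have "\<dots> = rot n (\<tau> t) (- int j)" by (rule rot_mod) (simp add: i(2))
      finally have tu: "\<tau> u = rot n (\<tau> t) (- int j)" .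
      have "L (foldl \<delta> s0 u) = {q. (q,0) \<in> subtree I \<tau> u []}"
        unfolding run[OF u] L_def hg[OF subF[OF u]] ..
      also have "\<dots> = {q. (q,0) \<in> \<tau> u}" unfolding subtree_def by simp
      also have "\<dots> = {q. (q,j) \<in> \<tau> t}" unfolding tu using rot_mem0[OF tsub j] by blast
      finally show ?thesis unfolding u_def .
    qed
    have "induced_tree n \<delta> s0 L t = (\<Union>j<n. {q. (q,j) \<in> \<tau> t} \<times> {j})"
      unfolding ind_eq using Lj by (intro SUP_cong refl) simp
    also have "\<dots> = \<tau> t" using tsub by auto
    finally show ?thesis by simp
  qed
  show ?thesis using mm out unfolding I_def by blast
qed


theorem lemma5:
  fixes n :: nat and API :: "'a set" and APO :: "'b set"
    and \<tau> :: "('a \<times> nat) set list \<Rightarrow> ('b \<times> nat) set"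
  assumes "n \<ge> 1" and "finite API" and "finite APO"
    and "\<forall>t \<in> lists (alph n API). \<tau> t \<in> alph n APO"
  shows "(regular_tree (alph n API) \<tau> \<and> symmetric_tree n API \<tau>) \<longleftrightarrow>
         (\<exists>S \<delta> s0 L. moore_machine S (alph n API) APO \<delta> s0 L \<and>
            (\<forall>t \<in> lists (alph n API). \<tau> t = induced_tree n \<delta> s0 L t))"
proof
  have n: "n > 0" using assms(1) by simp
  assume "regular_tree (alph n API) \<tau> \<and> symmetric_tree n API \<tau>"
  then show "\<exists>S \<delta> s0 L. moore_machine S (alph n API) APO \<delta> s0 L \<and>
            (\<forall>t \<in> lists (alph n API). \<tau> t = induced_tree n \<delta> s0 L t)"
    using fwd[OF n assms(4)] by blast
next
  have n: "n > 0" using assms(1) by simp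
  assume "\<exists>S \<delta> s0 L. moore_machine S (alph n API) APO \<delta> s0 L \<and>
            (\<forall>t \<in> lists (alph n API). \<tau> t = induced_tree n \<delta> s0 L t)"
  then obtain S \<delta> s0 L where mm: "moore_machine S (alph n API) APO \<delta> s0 L"
    and eq: "\<forall>t \<in> lists (alph n API). \<tau> t = induced_tree n \<delta> s0 L t" by blast
  show "regular_tree (alph n API) \<tau> \<and> symmetric_tree n API \<tau>"
    using bwd_reg[OF n mm eq] bwd_sym[OF n eq] by blast
qed

end
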